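(* Let $M$ be a set of $5$ indivisible items. There exist strict monotone preferences $\preceq_1,\preceq_2$ over $2^M$ for two agents and a Pareto optimal allocation $\mathcal S=(S_1,S_2)$ such that for no budget profile $(b_1,b_2)$ with $b_1,b_2>0$ do there exist prices $p$ making $(\mathcal S,p)$ a competitive equilibrium.
   Context: A monotone preference $\preceq_i$ is a complete and transitive weak order over all subsets of $M$ such that $S\preceq_i T$ whenever $S\subseteq T$; it is strict if for any $S\ne T$ either $S\prec_i T$ or $T\prec_i S$ (where $S\prec_i T$ means $S\preceq_i T$ and not $T\preceq_i S$). An allocation is a partition $(S_1,S_2)$ of all items of $M$ between the agents. An allocation $\mathcal S$ is Pareto optimal if for every allocation $\mathcal S'\ne\mathcal S$ there is an agent $i$ with $S'_i\prec_i S_i$. Given item prices $p$ with $p(S)=\sum_{j\in S}p_j$, a bundle $S$ is demanded by agent $i$ with budget $b_i$ if $p(S)\le b_i$ and $p(T)>b_i$ for every $T$ with $S\prec_i T$. $(\mathcal S,p)$ is a competitive equilibrium if $S_i$ is demanded by agent $i$ at prices $p$ for each $i$. *)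

theory Defs
  imports Complex_Main
begin

text \<open>A preference over subsets of the item set M is modelled as a relation
  R :: 'a set => 'a set => bool, where R S T means S is weakly below T.\<close>

definition strictly_pref :: "('a set \<Rightarrow> 'a set \<Rightarrow> bool) \<Rightarrow> 'a set \<Rightarrow> 'a set \<Rightarrow> bool" where
  "strictly_pref R S T \<longleftrightarrow> R S T \<and> \<not> R T S"

definition monotone_pref :: "'a set \<Rightarrow> ('a set \<Rightarrow> 'a set \<Rightarrow> bool) \<Rightarrow> bool" where
  "monotone_pref M R \<longleftrightarrow>
     (\<forall>S T. S \<subseteq> M \<and> T \<subseteq> M \<longrightarrow> R S T \<or> R T S) \<and>
     (\<forall>S T U. S \<subseteq> M \<and> T \<subseteq> M \<and> U \<subseteq> M \<and> R S T \<and> R T U \<longrightarrow> R S U) \<and>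
     (\<forall>S T. S \<subseteq> T \<and> T \<subseteq> M \<longrightarrow> R S T)"

definition strict_pref :: "'a set \<Rightarrow> ('a set \<Rightarrow> 'a set \<Rightarrow> bool) \<Rightarrow> bool" where
  "strict_pref M R \<longleftrightarrow>
     (\<forall>S T. S \<subseteq> M \<and> T \<subseteq> M \<and> S \<noteq> T \<longrightarrow> strictly_pref R S T \<or> strictly_pref R T S)"

definition is_allocation :: "'a set \<Rightarrow> 'a set \<Rightarrow> 'a set \<Rightarrow> bool" where
  "is_allocation M S1 S2 \<longleftrightarrow> S1 \<union> S2 = M \<and> S1 \<inter> S2 = {}"

definition pareto_optimal ::
  "'a set \<Rightarrow> ('a set \<Rightarrow> 'a set \<Rightarrow> bool) \<Rightarrow> ('a set \<Rightarrow> 'a set \<Rightarrow> bool) \<Rightarrow> 'a set \<Rightarrow> 'a set \<Rightarrow> bool" where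
  "pareto_optimal M R1 R2 S1 S2 \<longleftrightarrow>
     (\<forall>T1 T2. is_allocation M T1 T2 \<and> (T1, T2) \<noteq> (S1, S2) \<longrightarrow>
        strictly_pref R1 T1 S1 \<or> strictly_pref R2 T2 S2)"

definition demanded ::
  "'a set \<Rightarrow> ('a set \<Rightarrow> 'a set \<Rightarrow> bool) \<Rightarrow> ('a \<Rightarrow> real) \<Rightarrow> real \<Rightarrow> 'a set \<Rightarrow> bool" where
  "demanded M R p b S \<longleftrightarrow>
     sum p S \<le> b \<and> (\<forall>T. T \<subseteq> M \<and> strictly_pref R S T \<longrightarrow> sum p T > b)"

definition competitive_equilibrium ::
  "'a set \<Rightarrow> ('a set \<Rightarrow> 'a set \<Rightarrow> bool) \<Rightarrow> ('a set \<Rightarrow> 'a set \<Rightarrow> bool) \<Rightarrow> real \<Rightarrow> real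
    \<Rightarrow> 'a set \<Rightarrow> 'a set \<Rightarrow> ('a \<Rightarrow> real) \<Rightarrow> bool" where
  "competitive_equilibrium M R1 R2 b1 b2 S1 S2 p \<longleftrightarrow>
     demanded M R1 p b1 S1 \<and> demanded M R2 p b2 S2"

end

theory Submission
  imports Defs
begin

lemma card5_obtain:
  assumes "card (M::'a set) = 5"
  shows "\<exists>a b c d e. M = {a,b,c,d,e} \<and> distinct [a,b,c,d,e]"
  using assms by (simp add: numeral_eq_Suc card_Suc_eq) (metis insertCI)

definition code :: "'a \<Rightarrow> 'a \<Rightarrow> 'a \<Rightarrow> 'a \<Rightarrow> 'a \<Rightarrow> 'a set \<Rightarrow> nat" where
  "code a b c d e S = of_bool (a \<in> S) + 2 * of_bool (b \<in> S) + 4 * of_bool (c \<in> S)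
     + 8 * of_bool (d \<in> S) + 16 * of_bool (e \<in> S)"

lemma code_lt: "code a b c d e S < 32"
  by (simp add: code_def)

lemma code_mono: "S \<subseteq> T \<Longrightarrow> code a b c d e S \<le> code a b c d e T"
  unfolding code_def by (intro add_mono mult_le_mono2) (auto simp: of_bool_def)

lemma bits5: fixes x0 x1 x2 x3 x4 y0 y1 y2 y3 y4 :: bool
  assumes "of_bool x0 + 2*of_bool x1 + 4*of_bool x2 + 8*of_bool x3 + 16*of_bool x4 = 
   (of_bool y0 + 2*of_bool y1 + 4*of_bool y2 + 8*of_bool y3 + 16*of_bool y4 :: nat)"
  shows "x0 = y0 \<and> x1 = y1 \<and> x2 = y2 \<and> x3 = y3 \<and> x4 = y4"
proof -
  have b: "\<And>P. of_bool P \<le> (1::nat)" by simp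
  have 4: "x4 = y4" using assms b[of x0] b[of x1] b[of x2] b[of x3] b[of y0] b[of y1] b[of y2] b[of y3]
    by (cases x4; cases y4; simp; linarith)
  have 3: "x3 = y3" using assms 4 b[of x0] b[of x1] b[of x2] b[of y0] b[of y1] b[of y2]
    by (cases x3; cases y3; simp; linarith)
  have 2: "x2 = y2" using assms 4 3 b[of x0] b[of x1] b[of y0] b[of y1]
    by (cases x2; cases y2; simp; linarith)
  have 1: "x1 = y1" using assms 4 3 2 b[of x0] b[of y0]
    by (cases x1; cases y1; simp; linarith)
  have 0: "x0 = y0" using assms 4 3 2 1 by (cases x0; cases y0; simp)
  show ?thesis using 0 1 2 3 4 by simp
qed

lemma code_inj:
  assumes "code a b c d e S = code a b c d e T"
    and "S \<subseteq> {a,b,c,d,e}" "T \<subseteq> {a,b,c,d,e}"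
  shows "S = T"
proof -
  have "(a \<in> S \<longleftrightarrow> a \<in> T) \<and> (b \<in> S \<longleftrightarrow> b \<in> T) \<and> (c \<in> S \<longleftrightarrow> c \<in> T)
        \<and> (d \<in> S \<longleftrightarrow> d \<in> T) \<and> (e \<in> S \<longleftrightarrow> e \<in> T)"
    using bits5[OF assms(1)[unfolded code_def]] by blast
  then show ?thesis using assms(2,3) by blast
qed

definition lev1 :: "'a \<Rightarrow> 'a \<Rightarrow> 'a \<Rightarrow> 'a \<Rightarrow> 'a \<Rightarrow> 'a set \<Rightarrow> nat" where
  "lev1 a b c d e S = (if {a,b} \<subseteq> S \<or> {c,d} \<subseteq> S then 2 else if {a,c,e} \<subseteq> S then 1 else 0)"

definition lev2 :: "'a \<Rightarrow> 'a \<Rightarrow> 'a \<Rightarrow> 'a \<Rightarrow> 'a \<Rightarrow> 'a set \<Rightarrow> nat" where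
  "lev2 a b c d e S = (if {b,d,e} \<subseteq> S \<or> {a,c,e} \<subseteq> S \<or> {b,c,d} \<subseteq> S \<or> {a,b,d} \<subseteq> S then 2
     else if {b,d} \<subseteq> S then 1 else 0)"

lemma lev1_mono: "S \<subseteq> T \<Longrightarrow> lev1 a b c d e S \<le> lev1 a b c d e T"
  unfolding lev1_def by auto

lemma lev2_mono: "S \<subseteq> T \<Longrightarrow> lev2 a b c d e S \<le> lev2 a b c d e T"
  unfolding lev2_def by auto

definition util :: "('a set \<Rightarrow> nat) \<Rightarrow> ('a set \<Rightarrow> nat) \<Rightarrow> 'a set \<Rightarrow> nat" where
  "util l k S = 64 * l S + k S"

lemma util_inj:
  assumes "util l k S = util l k T" "k S < 32" "k T < 32" shows "k S = k T"
proof -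
  have "(64 * l S + k S) mod 64 = (64 * l T + k T) mod 64" using assms(1) by (simp add: util_def)
  then show ?thesis using assms(2,3) by simp
qed

lemma pref_lemmas:
  fixes l :: "'a set \<Rightarrow> nat"
  assumes lm: "\<And>S T. S \<subseteq> T \<Longrightarrow> l S \<le> l T"
    and M: "M = {a,b,c,d,e}"
  defines "R \<equiv> \<lambda>S T. util l (code a b c d e) S \<le> util l (code a b c d e) T"
  shows "monotone_pref M R \<and> strict_pref M R"
proof
  have mono: "util l (code a b c d e) S \<le> util l (code a b c d e) T" if "S \<subseteq> T" for S T
  proof -
    have "l S \<le> l T" "code a b c d e S \<le> code a b c d e T"
      using lm[OF that] code_mono[OF that] by auto
    then show ?thesis unfolding util_def by simp
  qed
  show "monotone_pref M R"
    unfolding monotone_pref_def R_def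
  proof (intro conjI allI impI)
    fix S T assume "S \<subseteq> T \<and> T \<subseteq> M"
    then show "util l (code a b c d e) S \<le> util l (code a b c d e) T" using mono by simp
  next
    fix S T show "util l (code a b c d e) S \<le> util l (code a b c d e) T \<or>
      util l (code a b c d e) T \<le> util l (code a b c d e) S" by (rule nat_le_linear)
  next
    fix S T U assume "S \<subseteq> M \<and> T \<subseteq> M \<and> U \<subseteq> M \<and> util l (code a b c d e) S \<le> util l (code a b c d e) T
      \<and> util l (code a b c d e) T \<le> util l (code a b c d e) U"
    then show "util l (code a b c d e) S \<le> util l (code a b c d e) U" by linarith
  qed
  show "strict_pref M R"
    unfolding strict_pref_def strictly_pref_def R_def
  proof (intro allI impI)
    fix S T assume h: "S \<subseteq> M \<and> T \<subseteq> M \<and> S \<noteq> T"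
    have "util l (code a b c d e) S \<noteq> util l (code a b c d e) T"
    proof
      assume "util l (code a b c d e) S = util l (code a b c d e) T"
      then have "code a b c d e S = code a b c d e T"
        using util_inj[of l "code a b c d e" S T] code_lt[of a b c d e S] code_lt[of a b c d e T] by blast
      then have "S = T" using code_inj[of a b c d e S T] h M by blast
      then show False using h by blast
    qed
    then show "util l (code a b c d e) S \<le> util l (code a b c d e) T \<and>
      \<not> util l (code a b c d e) T \<le> util l (code a b c d e) S \<or>
      util l (code a b c d e) T \<le> util l (code a b c d e) S \<and>
      \<not> util l (code a b c d e) S \<le> util l (code a b c d e) T" by linarith
  qed
qed

theorem mainTheorem4:
  fixes M :: "'a set"
  assumes "finite M" and "card M = 5"
  shows "\<exists>R1 R2 S1 S2.
           monotone_pref M R1 \<and> strict_pref M R1 \<and>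
           monotone_pref M R2 \<and> strict_pref M R2 \<and>
           is_allocation M S1 S2 \<and> pareto_optimal M R1 R2 S1 S2 \<and>
           \<not> (\<exists>b1 b2 (p :: 'a \<Rightarrow> real). b1 > 0 \<and> b2 > 0 \<and>
                 competitive_equilibrium M R1 R2 b1 b2 S1 S2 p)"
proof -
  obtain a b c d e where M: "M = {a,b,c,d,e}" and dist: "distinct [a,b,c,d,e]"
    using card5_obtain[OF assms(2)] by blast
  define u1 where "u1 = util (lev1 a b c d e) (code a b c d e)"
  define u2 where "u2 = util (lev2 a b c d e) (code a b c d e)"
  define R1 where "R1 = (\<lambda>S T. u1 S \<le> u1 T)"
  define R2 where "R2 = (\<lambda>S T. u2 S \<le> u2 T)"
  have P1: "monotone_pref M R1 \<and> strict_pref M R1"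
    unfolding R1_def u1_def by (rule pref_lemmas[OF lev1_mono M])
  have P2: "monotone_pref M R2 \<and> strict_pref M R2"
    unfolding R2_def u2_def by (rule pref_lemmas[OF lev2_mono M])
  have sp1: "strictly_pref R1 S T \<longleftrightarrow> u1 S < u1 T" for S T
    unfolding strictly_pref_def R1_def by auto
  have sp2: "strictly_pref R2 S T \<longleftrightarrow> u2 S < u2 T" for S T
    unfolding strictly_pref_def R2_def by auto
  have alloc: "is_allocation M {a,c,e} {b,d}"
    using dist M unfolding is_allocation_def by auto
  have po: "pareto_optimal M R1 R2 {a,c,e} {b,d}"
    unfolding pareto_optimal_def sp1 sp2
  proof (intro allI impI)
    fix T1 T2 assume h: "is_allocation M T1 T2 \<and> (T1, T2) \<noteq> ({a, c, e}, {b, d})"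
    have T2: "T2 = M - T1" and T1M: "T1 \<subseteq> M" using h unfolding is_allocation_def by auto
    have ne: "T1 \<noteq> {a,c,e}"
    proof
      assume "T1 = {a,c,e}"
      then have "T2 = {b,d}" using T2 M dist by auto
      with \<open>T1 = {a,c,e}\<close> h show False by simp
    qed
    have u1S: "u1 {a,c,e} \<ge> 64" unfolding u1_def util_def lev1_def by simp
    have u2S: "u2 {b,d} \<ge> 64" unfolding u2_def util_def lev2_def by simp
    show "u1 T1 < u1 {a,c,e} \<or> u2 T2 < u2 {b,d}"
    proof (cases "{a,b} \<subseteq> T1 \<or> {c,d} \<subseteq> T1")
      case True
      then have "lev2 a b c d e T2 = 0" using T2 unfolding lev2_def by auto
      then have "u2 T2 < 64" unfolding u2_def util_def using code_lt[of a b c d e T2] by simp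
      then show ?thesis using u2S by simp
    next
      case False
      have "lev1 a b c d e T1 = 0"
      proof (rule ccontr)
        assume "lev1 a b c d e T1 \<noteq> 0"
        then have "{a,c,e} \<subseteq> T1" using False unfolding lev1_def by (auto split: if_splits)
        moreover have "b \<notin> T1" "d \<notin> T1" using False calculation by auto
        ultimately have "T1 = {a,c,e}" using T1M M by auto
        then show False using ne by simp
      qed
      then have "u1 T1 < 64" unfolding u1_def util_def using code_lt[of a b c d e T1] by simp
      then show ?thesis using u1S by simp
    qed
  qed
  have noce: "\<not> (\<exists>b1 b2 (p :: 'a \<Rightarrow> real). b1 > 0 \<and> b2 > 0 \<and>
                 competitive_equilibrium M R1 R2 b1 b2 {a,c,e} {b,d} p)"
  proof
    assume "\<exists>b1 b2 (p :: 'a \<Rightarrow> real). b1 > 0 \<and> b2 > 0 \<and>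
                 competitive_equilibrium M R1 R2 b1 b2 {a,c,e} {b,d} p"
    then obtain b1 b2 and p :: "'a \<Rightarrow> real" where
      ce: "competitive_equilibrium M R1 R2 b1 b2 {a,c,e} {b,d} p" by blast
    have d1: "sum p {a,c,e} \<le> b1" and d1': "\<And>T. T \<subseteq> M \<Longrightarrow> u1 {a,c,e} < u1 T \<Longrightarrow> sum p T > b1"
      and d2: "sum p {b,d} \<le> b2" and d2': "\<And>T. T \<subseteq> M \<Longrightarrow> u2 {b,d} < u2 T \<Longrightarrow> sum p T > b2"
      using ce unfolding competitive_equilibrium_def demanded_def sp1 sp2 by auto
    have "sum p {a,b} > b1"
      by (rule d1') (use M dist in \<open>auto simp: u1_def util_def lev1_def code_def\<close>)
    moreover have "sum p {c,d} > b1"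
      by (rule d1') (use M dist in \<open>auto simp: u1_def util_def lev1_def code_def\<close>)
    moreover have "sum p {b,d,e} > b2"
      by (rule d2') (use M dist in \<open>auto simp: u2_def util_def lev2_def code_def\<close>)
    moreover have "sum p {a,c,e} > b2"
      by (rule d2') (use M dist in \<open>auto simp: u2_def util_def lev2_def code_def\<close>)
    ultimately show False using d1 d2 dist by simp
  qed
  show ?thesis using P1 P2 alloc po noce by blast
qed

end
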